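(* For every multigraph $G$ and every family $\mathcal{F}$ of multigraphs, $\mathrm{wsat}(G,\mathcal{F})\geq\mathrm{rk}\text{-}\mathrm{sat}(G,\mathcal{F})$.
   Context: A multigraph on vertex set $V$ has as edge set a multiset of pairs from $\binom{V}{2}$; different instances of the same pair are treated as distinct elements. For a multigraph $G$ and a family $\mathcal{F}$ of multigraphs, a spanning submultigraph $H$ of $G$ is weakly $\mathcal{F}$-saturated in $G$ if $G$ can be obtained from $H$ by adding the missing edge instances one at a time so that each added edge instance belongs to a copy (in the current multigraph) of some $F\in\mathcal{F}$. $\mathrm{wsat}(G,\mathcal{F})$ is the minimum number of edges (counted with multiplicity) of a weakly $\mathcal{F}$-saturated submultigraph of $G$. A matroid $M$ on the ground set $E(G)$ (edge instances) is weakly $\mathcal{F}$-saturated if for every $F\in\mathcal{F}$, every copy $\tilde F$ of $F$ in $G$ is a cycle of $M$, i.e. $\mathrm{rk}_M(E(\tilde F)\setminus\{e\})=\mathrm{rk}_M(E(\tilde F))$ for all $e\in E(\tilde F)$. $\mathrm{rk}\text{-}\mathrm{sat}(G,\mathcal{F})$ is the maximum rank of a weakly $\mathcal{F}$-saturated matroid on $E(G)$. *)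

theory Defs
  imports Main
begin

text \<open>Parallel edges are
  distinct edge instances with the same endpoints.\<close>
record ('v, 'e) mgraph =
  verts :: "'v set"
  edges :: "'e set"
  ends  :: "'e \<Rightarrow> 'v set"

definition multigraph :: "('v, 'e) mgraph \<Rightarrow> bool" where
  "multigraph G \<longleftrightarrow> finite (verts G) \<and> finite (edges G) \<and>
     (\<forall>e\<in>edges G. ends G e \<subseteq> verts G \<and> card (ends G e) = 2)"

definition copy_edges :: "('u, 'f) mgraph \<Rightarrow> ('v, 'e) mgraph \<Rightarrow> 'e set \<Rightarrow> bool" where
  "copy_edges F G S \<longleftrightarrow> (\<exists>\<phi> \<psi>. inj_on \<phi> (verts F) \<and> \<phi> ` verts F \<subseteq> verts G \<and>
      inj_on \<psi> (edges F) \<and> \<psi> ` edges F = S \<and> S \<subseteq> edges G \<and>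
      (\<forall>f\<in>edges F. ends G (\<psi> f) = \<phi> ` ends F f))"

text \<open>H (a set of edge instances of G; the spanning submultigraph) is weakly
  F-saturated in G: the missing edge instances can be added one at a time, each
  lying in a copy of some member of the family in the current multigraph.\<close>
definition weakly_sat :: "('v, 'e) mgraph \<Rightarrow> ('u, 'f) mgraph set \<Rightarrow> 'e set \<Rightarrow> bool" where
  "weakly_sat G \<F> H \<longleftrightarrow> H \<subseteq> edges G \<and>
     (\<exists>es. distinct es \<and> set es = edges G - H \<and>
        (\<forall>i<length es. \<exists>F\<in>\<F>. \<exists>S.
            copy_edges F (G\<lparr>edges := H \<union> set (take (Suc i) es)\<rparr>) S \<and> es ! i \<in> S))"

definition wsat :: "('v, 'e) mgraph \<Rightarrow> ('u, 'f) mgraph set \<Rightarrow> nat" where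
  "wsat G \<F> = Min (card ` {H. weakly_sat G \<F> H})"

definition matroid :: "'e set \<Rightarrow> ('e set \<Rightarrow> bool) \<Rightarrow> bool" where
  "matroid E indep \<longleftrightarrow> indep {} \<and>
     (\<forall>X. indep X \<longrightarrow> X \<subseteq> E) \<and>
     (\<forall>X Y. indep Y \<and> X \<subseteq> Y \<longrightarrow> indep X) \<and>
     (\<forall>X Y. indep X \<and> indep Y \<and> card X < card Y \<longrightarrow> (\<exists>y\<in>Y - X. indep (insert y X)))"

definition mrank :: "('e set \<Rightarrow> bool) \<Rightarrow> 'e set \<Rightarrow> nat" where
  "mrank indep X = Max (card ` {I. I \<subseteq> X \<and> indep I})"

definition is_cycle :: "('e set \<Rightarrow> bool) \<Rightarrow> 'e set \<Rightarrow> bool" where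
  "is_cycle indep C \<longleftrightarrow> (\<forall>e\<in>C. mrank indep (C - {e}) = mrank indep C)"

definition weakly_sat_matroid :: "('v, 'e) mgraph \<Rightarrow> ('u, 'f) mgraph set \<Rightarrow> ('e set \<Rightarrow> bool) \<Rightarrow> bool" where
  "weakly_sat_matroid G \<F> indep \<longleftrightarrow> matroid (edges G) indep \<and>
     (\<forall>F\<in>\<F>. \<forall>S. copy_edges F G S \<longrightarrow> is_cycle indep S)"

definition rk_sat :: "('v, 'e) mgraph \<Rightarrow> ('u, 'f) mgraph set \<Rightarrow> nat" where
  "rk_sat G \<F> = Max {mrank indep (edges G) | indep. weakly_sat_matroid G \<F> indep}"

end

theory Submission
  imports Defs
begin

lemma m_fin:
  assumes "matroid E indep" "finite E"
  shows "finite {I. I \<subseteq> A \<and> indep I}"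
proof -
  have "{I. I \<subseteq> A \<and> indep I} \<subseteq> Pow E" using assms(1) unfolding matroid_def by blast
  thus ?thesis using assms(2) finite_subset by blast
qed

lemma m_ge:
  assumes "matroid E indep" "finite E" "I \<subseteq> A" "indep I"
  shows "card I \<le> mrank indep A"
  unfolding mrank_def using m_fin[OF assms(1,2), of A] assms(3,4)
  by (intro Max_ge) auto

lemma m_ex:
  assumes "matroid E indep" "finite E"
  shows "\<exists>I. I \<subseteq> A \<and> indep I \<and> card I = mrank indep A"
proof -
  have ne: "{} \<in> {I. I \<subseteq> A \<and> indep I}" using assms(1) unfolding matroid_def by auto
  have "mrank indep A \<in> card ` {I. I \<subseteq> A \<and> indep I}"
    unfolding mrank_def using m_fin[OF assms, of A] ne by (intro Max_in) auto
  thus ?thesis by auto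
qed

lemma m_le_card:
  assumes "matroid E indep" "finite E" "finite A"
  shows "mrank indep A \<le> card A"
proof -
  obtain I where "I \<subseteq> A" "card I = mrank indep A" using m_ex[OF assms(1,2), of A] by blast
  thus ?thesis using assms(3) card_mono by metis
qed

lemma m_ext:
  assumes "matroid E indep" "finite E" "J \<subseteq> A" "indep J"
  shows "\<exists>B. J \<subseteq> B \<and> B \<subseteq> A \<and> indep B \<and> card B = mrank indep A"
proof -
  define C where "C = {B. J \<subseteq> B \<and> B \<subseteq> A \<and> indep B}"
  have "C \<subseteq> {I. I \<subseteq> A \<and> indep I}" unfolding C_def by blast
  hence fin: "finite C" using m_fin[OF assms(1,2), of A] finite_subset by blast
  have JC: "J \<in> C" unfolding C_def using assms(3,4) by blast
  have "Max (card ` C) \<in> card ` C" using fin JC by (intro Max_in) auto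
  then obtain B where B: "B \<in> C" "card B = Max (card ` C)" by auto
  have maxB: "card B' \<le> card B" if "B' \<in> C" for B'
    unfolding B(2) using fin that by (intro Max_ge) auto
  obtain K where K: "K \<subseteq> A" "indep K" "card K = mrank indep A" using m_ex[OF assms(1,2)] by blast
  have Bp: "J \<subseteq> B" "B \<subseteq> A" "indep B" using B(1) unfolding C_def by auto
  have "card B \<le> mrank indep A" using Bp m_ge[OF assms(1,2)] by blast
  moreover have "\<not> card B < card K"
  proof
    assume lt: "card B < card K"
    have aug: "\<forall>X Y. indep X \<and> indep Y \<and> card X < card Y \<longrightarrow> (\<exists>y\<in>Y - X. indep (insert y X))"
      using assms(1) unfolding matroid_def by blast
    then obtain y where y: "y \<in> K - B" "indep (insert y B)"
      using Bp(3) K(2) lt by blast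
    have "B \<subseteq> E" using Bp(3) assms(1) unfolding matroid_def by blast
    hence fB: "finite B" using assms(2) finite_subset by blast
    have "insert y B \<in> C" unfolding C_def using y Bp K(1) by blast
    hence "card (insert y B) \<le> card B" by (rule maxB)
    thus False using y fB by simp
  qed
  ultimately show ?thesis using Bp K by auto
qed

lemma m_step:
  assumes "matroid E indep" "finite E" "e \<in> S" "mrank indep (S - {e}) = mrank indep S"
    "S - {e} \<subseteq> X"
  shows "mrank indep (insert e X) \<le> mrank indep X"
proof (rule ccontr)
  assume a: "\<not> ?thesis"
  obtain I where I: "I \<subseteq> S - {e}" "indep I" "card I = mrank indep (S - {e})"
    using m_ex[OF assms(1,2)] by blast
  obtain J where J: "I \<subseteq> J" "J \<subseteq> X" "indep J" "card J = mrank indep X"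
    using m_ext[OF assms(1,2), of I X] I assms(5) by blast
  obtain K where K: "K \<subseteq> insert e X" "indep K" "card K = mrank indep (insert e X)"
    using m_ex[OF assms(1,2)] by blast
  have lt: "card J < card K" using a J K by simp
  have aug: "\<forall>X Y. indep X \<and> indep Y \<and> card X < card Y \<longrightarrow> (\<exists>y\<in>Y - X. indep (insert y X))"
    and hered: "\<forall>X Y. indep Y \<and> X \<subseteq> Y \<longrightarrow> indep X"
    using assms(1) unfolding matroid_def by blast+
  obtain y where y: "y \<in> K - J" "indep (insert y J)"
    using aug J(3) K(2) lt by blast
  have "J \<subseteq> E" using J(3) assms(1) unfolding matroid_def by blast
  hence fJ: "finite J" using assms(2) finite_subset by blast
  have fI: "finite I" using J(1) fJ finite_subset by blast
  show False
  proof (cases "y \<in> X")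
    case True
    have "insert y J \<subseteq> X" using True J(2) by blast
    hence "card (insert y J) \<le> mrank indep X"
      using m_ge[OF assms(1,2)] y(2) by blast
    thus False using y fJ J by simp
  next
    case False
    hence "y = e" using y K by auto
    have "insert e I \<subseteq> insert y J" using J(1) \<open>y = e\<close> by blast
    hence ind: "indep (insert e I)" using hered y(2) by blast
    have "insert e I \<subseteq> S" using I assms(3) by auto
    hence "card (insert e I) \<le> mrank indep S" using m_ge[OF assms(1,2)] ind by blast
    moreover have "e \<notin> I" using I by auto
    ultimately show False using fI I assms(4) by simp
  qed
qed

lemma copy_transfer:
  assumes "copy_edges F (G\<lparr>edges := H'\<rparr>) S" "H' \<subseteq> edges G"
  shows "copy_edges F G S"
proof -
  obtain \<phi> \<psi> where "inj_on \<phi> (verts F)" "\<phi> ` verts F \<subseteq> verts G"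
      "inj_on \<psi> (edges F)" "\<psi> ` edges F = S" "S \<subseteq> H'"
      "\<forall>f\<in>edges F. ends G (\<psi> f) = \<phi> ` ends F f"
    using assms(1) unfolding copy_edges_def by auto
  thus ?thesis unfolding copy_edges_def using assms(2) by blast
qed

lemma main:
  assumes G: "multigraph G" and H: "weakly_sat G \<F> H" and M: "weakly_sat_matroid G \<F> indep"
  shows "mrank indep (edges G) \<le> card H"
proof -
  have mat: "matroid (edges G) indep" using M unfolding weakly_sat_matroid_def by auto
  have fE: "finite (edges G)" using G unfolding multigraph_def by auto
  obtain es where es: "H \<subseteq> edges G" "distinct es" "set es = edges G - H"
    "\<forall>i<length es. \<exists>F\<in>\<F>. \<exists>S.
            copy_edges F (G\<lparr>edges := H \<union> set (take (Suc i) es)\<rparr>) S \<and> es ! i \<in> S"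
    using H unfolding weakly_sat_def by blast
  have step: "mrank indep (H \<union> set (take i es)) \<le> mrank indep H" if "i \<le> length es" for i
    using that
  proof (induction i)
    case 0 thus ?case by simp
  next
    case (Suc i)
    hence il: "i < length es" by simp
    then obtain F S where FS: "F \<in> \<F>" "copy_edges F (G\<lparr>edges := H \<union> set (take (Suc i) es)\<rparr>) S"
      "es ! i \<in> S" using es(4) by blast
    have sub: "H \<union> set (take (Suc i) es) \<subseteq> edges G" using es(1,3) set_take_subset by fastforce
    have cyc: "is_cycle indep S" using M FS copy_transfer[OF FS(2) sub]
      unfolding weakly_sat_matroid_def by blast
    have tk: "set (take (Suc i) es) = insert (es ! i) (set (take i es))"
      using il by (simp add: take_Suc_conv_app_nth)
    have Ssub: "S \<subseteq> H \<union> set (take (Suc i) es)" using FS(2) unfolding copy_edges_def by auto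
    have "mrank indep (insert (es ! i) (H \<union> set (take i es))) \<le> mrank indep (H \<union> set (take i es))"
      apply (rule m_step[OF mat fE FS(3)])
      using cyc FS(3) apply (simp add: is_cycle_def)
      using Ssub tk by auto
    moreover have "H \<union> set (take (Suc i) es) = insert (es ! i) (H \<union> set (take i es))"
      using tk by auto
    ultimately show ?case using Suc by simp
  qed
  have "H \<union> set es = edges G" using es by auto
  hence "mrank indep (edges G) \<le> mrank indep H" using step[of "length es"] by simp
  also have "\<dots> \<le> card H" using m_le_card[OF mat fE] es(1) fE finite_subset by blast
  finally show ?thesis .
qed

theorem lemma2:
  fixes G :: "('v, 'e) mgraph" and \<F> :: "('u, 'f) mgraph set"
  assumes "multigraph G" and "\<forall>F\<in>\<F>. multigraph F"
  shows "wsat G \<F> \<ge> rk_sat G \<F>"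
proof -
  have fE: "finite (edges G)" using assms(1) unfolding multigraph_def by auto
  let ?T = "{H. weakly_sat G \<F> H}"
  have "edges G \<in> ?T" unfolding weakly_sat_def by (intro CollectI conjI exI[of _ "[]"]) auto
  moreover have "?T \<subseteq> Pow (edges G)" unfolding weakly_sat_def by blast
  hence "finite ?T" using fE finite_subset by blast
  ultimately have "wsat G \<F> \<in> card ` ?T" unfolding wsat_def by (intro Min_in) auto
  then obtain H where H: "weakly_sat G \<F> H" "wsat G \<F> = card H" by auto
  let ?S = "{mrank indep (edges G) | indep. weakly_sat_matroid G \<F> indep}"
  define triv where "triv = (\<lambda>X::'e set. X = {})"
  have tm: "matroid (edges G) triv" unfolding matroid_def triv_def by auto
  have r0: "mrank triv A = 0" for A
    using m_ex[OF tm fE, of A] by (auto simp: triv_def)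
  have "weakly_sat_matroid G \<F> triv" unfolding weakly_sat_matroid_def is_cycle_def
    using tm r0 by auto
  hence ne: "?S \<noteq> {}" by blast
  have "?S \<subseteq> {..card (edges G)}"
  proof
    fix s assume "s \<in> ?S"
    then obtain ind where "s = mrank ind (edges G)" "weakly_sat_matroid G \<F> ind" by blast
    thus "s \<in> {..card (edges G)}" using m_le_card[OF _ fE fE, of ind]
      unfolding weakly_sat_matroid_def by simp
  qed
  hence fin: "finite ?S" using finite_subset by blast
  have "\<forall>s\<in>?S. s \<le> card H" using main[OF assms(1) H(1)] by blast
  hence "Max ?S \<le> card H" using fin ne by simp
  thus ?thesis unfolding rk_sat_def H(2) .
qed

end
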